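(* Let $p,n$ be positive integers with $c=\gcd(p,n)$ prime, and $y\in\mathbb{Z}_n$. Let $\varphi_i,\varphi_j\in\operatorname{End}((\mathbb{Z}_n,y,y))$ (where $\varphi_m$ denotes the pointed endomorphism with $\varphi_m(y+1)=m$) and let $\alpha\in\hom(P(\widetilde{\mathcal{T}(p,2)}),(\mathbb{Z}_n,y,y))$ be a nontrivial (non-constant) coloring. Then $\varphi_i\circ\alpha=\varphi_j\circ\alpha$ if and only if $i\equiv j\pmod c$.
   Context: $\mathbb{Z}_n$ is the dihedral quandle ($x\triangleright y=2y-x$ mod $n$) and $(\mathbb{Z}_n,y,y)$ the $2$-pointed quandle with both basepoints $y$; pointed endomorphisms are quandle endomorphisms fixing $y$, and each is determined by its value at $y+1$. $P(\widetilde{\mathcal{T}(p,2)})=(Q,x_1,x_{p+1})$ with $Q=\langle x_1,\dots,x_{p+1}\mid x_p=x_2\triangleright x_{p+1},\ x_i=x_{i+2}\triangleright x_{i+1}\ (1\le i\le p-1)\rangle$, the fundamental pointed quandle of the $1$-linkoid of $(p,2)$-torus type; $\hom$ denotes basepoint-preserving homomorphisms. Since $c\mid n$, the congruence $i\equiv j \pmod c$ is well defined for $i,j\in\mathbb{Z}_n$. *)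

theory Defs
  imports "HOL-Number_Theory.Number_Theory"
begin

text \<open>The dihedral quandle Z_n, carrier {0..<n} (as integers), x |> z = 2z - x mod n.\<close>
definition dih :: "int \<Rightarrow> int \<Rightarrow> int \<Rightarrow> int" where
  "dih n x z = (2 * z - x) mod n"

definition pointed_end :: "int \<Rightarrow> int \<Rightarrow> (int \<Rightarrow> int) \<Rightarrow> bool" where
  "pointed_end n y f \<longleftrightarrow>
     (\<forall>x\<in>{0..<n}. f x \<in> {0..<n}) \<and>
     (\<forall>x\<in>{0..<n}. \<forall>z\<in>{0..<n}. f (dih n x z) = dih n (f x) (f z)) \<and>
     f y = y"

text \<open>Basepoint-preserving homomorphisms P(T(p,2)~) -> (Z_n,y,y), described (via the
  universal property of the presentation) by the images a 1, ..., a (p+1) of the generators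
  x_1, ..., x_(p+1), which must satisfy the defining relations and send both basepoints
  x_1, x_(p+1) to y.\<close>
definition torus_coloring :: "nat \<Rightarrow> int \<Rightarrow> int \<Rightarrow> (nat \<Rightarrow> int) \<Rightarrow> bool" where
  "torus_coloring p n y a \<longleftrightarrow>
     (\<forall>k\<in>{1..p+1}. a k \<in> {0..<n}) \<and>
     a p = dih n (a 2) (a (p+1)) \<and>
     (\<forall>i\<in>{1..p-1}. a i = dih n (a (i+2)) (a (i+1))) \<and>
     a 1 = y \<and> a (p+1) = y"

definition nontrivial_coloring :: "nat \<Rightarrow> (nat \<Rightarrow> int) \<Rightarrow> bool" where
  "nontrivial_coloring p a \<longleftrightarrow> (\<exists>k\<in>{1..p+1}. \<exists>l\<in>{1..p+1}. a k \<noteq> a l)"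

end

theory Submission
  imports Defs
begin

lemma dih_mod: "dih n (x mod n) (z mod n) = dih n x z"
proof -
  have "(2*(z mod n) - x mod n) mod n = (2*(z mod n) - x) mod n" by (rule mod_diff_right_eq)
  also have "\<dots> = ((2*(z mod n)) mod n - x) mod n" by (rule mod_diff_left_eq[symmetric])
  also have "\<dots> = ((2*z) mod n - x) mod n" by (simp only: mod_mult_right_eq)
  also have "\<dots> = (2*z - x) mod n" by (rule mod_diff_left_eq)
  finally show ?thesis by (simp only: dih_def)
qed

lemma dih_shift:
  assumes "n > 0"
  shows "dih n ((u::int) mod n) ((u + 1) mod n) = (u + 2) mod n"
proof -
  have "dih n (u mod n) ((u + 1) mod n) = (2 * (u+1) - u) mod n"
    unfolding dih_mod unfolding dih_def by (rule refl)
  also have "2 * (u+1) - u = u + 2" by simp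
  finally show ?thesis .
qed

lemma pe_affine_nat:
  assumes n: "n > 0" and y: "y \<in> {0..<n}" and pe: "pointed_end n y f"
  shows "f ((y + int t) mod n) = (y + int t * (f ((y+1) mod n) - y)) mod n
       \<and> f ((y + int (t+1)) mod n) = (y + int (t+1) * (f ((y+1) mod n) - y)) mod n"
proof (induction t)
  case 0
  have "f y = y" using pe by (simp add: pointed_end_def)
  moreover have "y mod n = y" using y by simp
  moreover have "(y + (f ((y + 1) mod n) - y)) mod n = f ((y+1) mod n)"
  proof -
    have "(y+1) mod n \<in> {0..<n}" using n by simp
    hence "f ((y + 1) mod n) \<in> {0..<n}" using pe by (simp add: pointed_end_def)
    thus ?thesis by simp
  qed
  ultimately show ?case by simp
next
  case (Suc t)
  let ?m = "f ((y+1) mod n) - y"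
  have c1: "(y + int t) mod n \<in> {0..<n}" "(y + int t + 1) mod n \<in> {0..<n}" using n by auto
  have "(y + int (Suc t + 1)) mod n = dih n ((y + int t) mod n) ((y + int t + 1) mod n)"
    using dih_shift[OF n, of "y + int t"] by (simp add: ac_simps)
  hence "f ((y + int (Suc t + 1)) mod n) = dih n (f ((y + int t) mod n)) (f ((y + int t + 1) mod n))"
    using pe c1 by (simp add: pointed_end_def)
  also have "\<dots> = dih n ((y + int t * ?m) mod n) ((y + int (t+1) * ?m) mod n)"
  proof -
    have "f ((y + int t + 1) mod n) = (y + int (t+1) * ?m) mod n"
      using Suc.IH by (simp add: ac_simps)
    thus ?thesis using Suc.IH by simp
  qed
  also have "\<dots> = (2 * (y + int (t+1) * ?m) - (y + int t * ?m)) mod n"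
    unfolding dih_mod unfolding dih_def by (rule refl)
  also have "2 * (y + int (t+1) * ?m) - (y + int t * ?m) = y + int (Suc t + 1) * ?m"
    by (simp add: algebra_simps)
  finally show ?case using Suc by simp
qed

lemma pe_affine:
  assumes n: "n > 0" and y: "y \<in> {0..<n}" and pe: "pointed_end n y f"
  shows "f ((y + s) mod n) = (y + s * (f ((y+1) mod n) - y)) mod n"
proof -
  define t where "t = nat (s mod n)"
  have ts: "int t = s mod n" using n by (simp add: t_def)
  have "f ((y + s) mod n) = f ((y + int t) mod n)" using ts by (simp add: mod_simps)
  also have "\<dots> = (y + int t * (f ((y+1) mod n) - y)) mod n"
    using pe_affine_nat[OF n y pe] by blast
  also have "\<dots> = (y + s * (f ((y+1) mod n) - y)) mod n"
    using ts by (metis mod_add_right_eq mod_mult_left_eq)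
  finally show ?thesis .
qed

lemma coloring_prog:
  assumes n: "n > 0" and tc: "torus_coloring p n y a" and k: "k \<le> p" and p: "p > 0"
  shows "a (k+1) = (y + int k * (a 2 - y)) mod n \<and> (k + 1 \<le> p \<longrightarrow> a (k+2) = (y + int (k+1) * (a 2 - y)) mod n)"
  using k
proof (induction k)
  case 0
  have "a 1 = y" "a 1 \<in> {0..<n}" "a 2 \<in> {0..<n}" using tc p by (auto simp: torus_coloring_def)
  then show ?case by (auto simp: numeral_2_eq_2)
next
  case (Suc k)
  let ?D = "a 2 - y"
  have IH: "a (k+1) = (y + int k * ?D) mod n" "a (k+2) = (y + int (k+1) * ?D) mod n"
    using Suc by auto
  have rest: "Suc k + 1 \<le> p \<longrightarrow> a (Suc k + 2) = (y + int (Suc k + 1) * ?D) mod n"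
  proof
    assume h: "Suc k + 1 \<le> p"
    have "k+1 \<in> {1..p-1}" using h by auto
    moreover have "\<forall>i\<in>{1..p-1}. a i = dih n (a (i+2)) (a (i+1))" using tc by (simp add: torus_coloring_def)
    ultimately have e0: "a (k+1) = dih n (a (k+1+2)) (a (k+1+1))" by blast
    hence "a (k+1) = dih n (a (k+3)) (a (k+2))" by (simp add: numeral_3_eq_3 numeral_2_eq_2)
    hence e: "a (k+1) = (2 * a (k+2) - a (k+3)) mod n" by (simp add: dih_def)
    have "a (k+3) \<in> {0..<n}" using tc h by (auto simp: torus_coloring_def)
    hence "a (k+3) = a (k+3) mod n" by simp
    also have "\<dots> = (2 * a (k+2) - a (k+1)) mod n"
    proof -
      have "(2 * a (k+2) - a (k+1)) mod n = (2 * a (k+2) - (2 * a (k+2) - a (k+3))) mod n"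
        using e by (simp add: mod_simps)
      thus ?thesis by simp
    qed
    also have "\<dots> = dih n (a (k+1)) (a (k+2))" by (simp add: dih_def)
    also have "\<dots> = dih n ((y + int k * ?D) mod n) ((y + int (k+1) * ?D) mod n)"
      using IH by simp
    also have "\<dots> = (2 * (y + int (k+1) * ?D) - (y + int k * ?D)) mod n"
      unfolding dih_mod unfolding dih_def by (rule refl)
    also have "2 * (y + int (k+1) * ?D) - (y + int k * ?D) = y + int (Suc k + 1) * ?D"
      by (simp add: algebra_simps)
    finally show "a (Suc k + 2) = (y + int (Suc k + 1) * ?D) mod n"
      by (simp add: numeral_3_eq_3 add.commute)
  qed
  show ?case using IH rest by simp
qed

lemma numth:
  fixes n D p e :: int
  assumes n: "n > 0" and p: "p > 0" and dv: "n dvd p * D" and nd: "\<not> n dvd D"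
    and pr: "prime (gcd p n)"
  shows "n dvd D * e \<longleftrightarrow> gcd p n dvd e"
proof -
  define g where "g = gcd D n"
  have g0: "g > 0" using n by (simp add: g_def)
  obtain n' where nn: "n = g * n'" unfolding g_def by (meson gcd_dvd2 dvd_def)
  obtain D' where DD: "D = g * D'" unfolding g_def by (meson gcd_dvd1 dvd_def)
  have cop: "coprime n' D'"
  proof -
    have "gcd D n = g * gcd D' n'" using DD nn g0 by (simp add: gcd_mult_left abs_of_pos)
    hence "g * gcd D' n' = g * 1" using g_def by simp
    hence "gcd D' n' = 1" using g0 by (metis mult_left_cancel less_irrefl)
    thus ?thesis by (simp add: coprime_iff_gcd_eq_1 gcd.commute)
  qed
  have n'pos: "n' > 0" using n g0 nn by (simp add: zero_less_mult_iff)
  have "n' dvd p * D'" using dv nn DD g0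
    by (metis mult.left_commute dvd_mult_cancel_left less_irrefl)
  hence n'p: "n' dvd p" using cop by (meson coprime_dvd_mult_left_iff)
  have "n' dvd n" using nn by simp
  hence n'c: "n' dvd gcd p n" using n'p by simp
  have "n' \<noteq> 1" using nd nn DD by auto
  moreover have "n' = 1 \<or> n' = gcd p n" using pr n'c n'pos unfolding prime_int_iff by auto
  ultimately have eq: "n' = gcd p n" by blast
  have "n dvd D * e \<longleftrightarrow> n' dvd D' * e" using nn DD g0 by (simp add: mult.assoc)
  also have "\<dots> \<longleftrightarrow> n' dvd e" using cop by (meson coprime_dvd_mult_right_iff)
  finally show ?thesis using eq by simp
qed

theorem lemma6p14:
  fixes p :: nat and n y i j :: int and f g :: "int \<Rightarrow> int" and a :: "nat \<Rightarrow> int"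
  assumes "p > 0" and "n > 0"
    and "prime (gcd (int p) n)"
    and "y \<in> {0..<n}"
    and "pointed_end n y f" and "f ((y + 1) mod n) = i"
    and "pointed_end n y g" and "g ((y + 1) mod n) = j"
    and "torus_coloring p n y a" and "nontrivial_coloring p a"
  shows "(\<forall>k\<in>{1..p+1}. f (a k) = g (a k)) \<longleftrightarrow> [i = j] (mod (gcd (int p) n))"
proof -
  note tc = assms(9)
  define D where "D = a 2 - y"
  have ak: "a k = (y + int (k-1) * D) mod n" if "k \<in> {1..p+1}" for k
  proof -
    have "k - 1 \<le> p" using that by auto
    from coloring_prog[OF assms(2) tc this assms(1)] show ?thesis
      using that by (simp add: D_def)
  qed
  have a1: "a (p+1) = y" using tc by (simp add: torus_coloring_def)
  have "(y + int p * D) mod n = y" using ak[of "p+1"] a1 by simp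
  hence "(y + int p * D) mod n = y mod n" using assms(4) by simp
  hence dv: "n dvd int p * D" by (simp add: mod_eq_dvd_iff)
  have nd: "\<not> n dvd D"
  proof
    assume "n dvd D"
    hence "a k = y" if "k \<in> {1..p+1}" for k
    proof -
      have "n dvd (y + int (k-1) * D) - y" using \<open>n dvd D\<close> by simp
      hence "(y + int (k-1) * D) mod n = y mod n" by (simp add: mod_eq_dvd_iff)
      thus ?thesis using ak[OF that] assms(4) by simp
    qed
    thus False using assms(10) by (auto simp: nontrivial_coloring_def)
  qed
  have fa: "f (a k) = (y + int (k-1) * D * (i - y)) mod n"
       "g (a k) = (y + int (k-1) * D * (j - y)) mod n" if "k \<in> {1..p+1}" for k
    using ak[OF that] pe_affine[OF assms(2) assms(4) assms(5), of "int (k-1) * D"]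
      pe_affine[OF assms(2) assms(4) assms(7), of "int (k-1) * D"] assms(6,8) by simp_all
  have eqv: "f (a k) = g (a k) \<longleftrightarrow> n dvd int (k-1) * (D * (i - j))" if "k \<in> {1..p+1}" for k
  proof -
    have "f (a k) = g (a k) \<longleftrightarrow> (y + int (k-1) * D * (i - y)) mod n = (y + int (k-1) * D * (j - y)) mod n"
      using fa[OF that] by simp
    also have "\<dots> \<longleftrightarrow> n dvd (y + int (k-1) * D * (i - y)) - (y + int (k-1) * D * (j - y))"
      by (simp add: mod_eq_dvd_iff)
    also have "(y + int (k-1) * D * (i - y)) - (y + int (k-1) * D * (j - y)) = int (k-1) * (D * (i - j))"
      by (simp add: algebra_simps)
    finally show ?thesis .
  qed
  have "(\<forall>k\<in>{1..p+1}. f (a k) = g (a k)) \<longleftrightarrow> n dvd D * (i - j)"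
  proof
    assume "\<forall>k\<in>{1..p+1}. f (a k) = g (a k)"
    hence "f (a 2) = g (a 2)" using assms(1) by auto
    thus "n dvd D * (i - j)" using eqv[of 2] assms(1) by auto
  next
    assume "n dvd D * (i - j)"
    thus "\<forall>k\<in>{1..p+1}. f (a k) = g (a k)" using eqv by auto
  qed
  also have "\<dots> \<longleftrightarrow> gcd (int p) n dvd (i - j)"
    using numth[OF assms(2) _ dv nd assms(3)] assms(1) by simp
  also have "\<dots> \<longleftrightarrow> [i = j] (mod (gcd (int p) n))"
    by (simp add: cong_iff_dvd_diff)
  finally show ?thesis .
qed

end
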